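(* For all natural numbers $P, N, m \geq 1$ and every real number $x \geq 1$, one has $$\Big|\sum_{n \leq x:\, (n,P)=1} \frac{\mu(n)}{n}\Big| \leq 1, \qquad \Big|\sum_{n \mid N:\, n \leq x} \frac{\mu(n)}{n}\Big| \leq 1, \qquad \Big|\sum_{n \leq x} \frac{\mu(mn)}{n}\Big| \leq 1,$$ where $n$ ranges over natural numbers.
   Context: $\mu$ denotes the Möbius function: $\mu(n) = (-1)^k$ if $n$ is a product of $k$ distinct primes, and $\mu(n)=0$ otherwise. $(n,P)$ denotes the greatest common divisor of $n$ and $P$. *)

theory Defs
  imports Complex_Main "HOL-Computational_Algebra.Squarefree"
begin

text \<open>Moebius function: (-1)^k if n is a product of k distinct primes, 0 otherwise.
  Defined for positive n; mu 0 = 0 by convention (irrelevant: n ranges over n >= 1).\<close>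
definition moebius_mu :: "nat \<Rightarrow> int" where
  "moebius_mu n = (if n = 0 then 0 else if squarefree n then (-1) ^ card (prime_factors n) else 0)"

end

theory Submission imports Defs begin

lemma sqf_prod_pf:
  fixes d :: nat assumes "squarefree d"
  shows "\<Prod>(prime_factors d) = d"
proof -
  have nz: "d \<noteq> 0" using assms(1) by (metis not_squarefree_0)
  have "(\<Prod>p \<in> prime_factors d. p ^ multiplicity p d) = d"
    using prod_prime_factors[OF nz] by simp
  moreover have "(\<Prod>p \<in> prime_factors d. p ^ multiplicity p d) = \<Prod>(prime_factors d)"
    using assms nz by (intro prod.cong) (auto simp: squarefree_factorial_semiring')
  ultimately show ?thesis by simp
qed

lemma pf_prod_primes:
  fixes S :: "nat set" assumes "finite S" "\<And>p. p \<in> S \<Longrightarrow> prime p"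
  shows "prime_factors (\<Prod>S) = S" "squarefree (\<Prod>S)"
proof -
  have "0 \<notin> id ` S" using assms(2) by fastforce
  hence "prime_factors (prod id S) = \<Union>((prime_factors \<circ> id) ` S)"
    using prime_factors_prod[OF assms(1)] by blast
  also have "\<dots> = S" using assms(2) by (auto simp: prime_prime_factors)
  finally show "prime_factors (\<Prod>S) = S" by simp
  show "squarefree (\<Prod>S)"
    using assms(2) by (intro squarefree_prod_coprime) (auto simp: primes_coprime squarefree_prime)
qed

lemma sqf_dvd:
  fixes d k :: nat assumes "squarefree d" "k \<noteq> 0" "prime_factors d \<subseteq> prime_factors k"
  shows "d dvd k"
proof -
  have nz: "d \<noteq> 0" using assms(1) by (metis not_squarefree_0)
  show ?thesis
  proof (subst prime_multiplicity_le_imp_dvd[OF nz assms(2)], intro allI impI)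
    fix p :: nat assume p: "prime p"
    show "multiplicity p d \<le> multiplicity p k"
    proof (cases "p \<in> prime_factors d")
      case True
      hence "multiplicity p d = 1" using assms(1) nz by (auto simp: squarefree_factorial_semiring')
      moreover have "multiplicity p k \<ge> 1" using True assms(3) p
        by (auto simp: prime_factors_multiplicity)
      ultimately show ?thesis by simp
    next
      case False
      hence "multiplicity p d = 0" using p nz
        by (auto simp: in_prime_factors_iff not_dvd_imp_multiplicity_0)
      thus ?thesis by simp
    qed
  qed
qed

lemma mu_prod: 
  fixes S :: "nat set" assumes "finite S" "\<And>p. p \<in> S \<Longrightarrow> prime p"
  shows "moebius_mu (\<Prod>S) = (-1) ^ card S"
proof -
  have "\<Prod>S \<noteq> 0" using assms by (metis not_prime_0 prod_zero_iff)
  thus ?thesis using pf_prod_primes[OF assms] by (simp add: moebius_mu_def)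
qed

lemma alt_sum:
  fixes Q :: "'a set" assumes "finite Q"
  shows "(\<Sum>S\<in>Pow Q. (-1::int) ^ card S) = (if Q = {} then 1 else 0)"
proof -
  have "(\<Prod>x\<in>Q. (1::int) - 1) = (\<Sum>X\<in>Pow Q. (-1) ^ card X * (\<Prod>x\<in>X. 1) * (\<Prod>x\<in>Q-X. 1))"
    by (rule prod_diff_conv_sum[OF assms])
  hence e: "(0::int) ^ card Q = (\<Sum>X\<in>Pow Q. (-1) ^ card X)" by simp
  show ?thesis
  proof (cases "Q = {}")
    case False
    hence "card Q > 0" using assms by (simp add: card_gt_0_iff)
    hence "(0::int) ^ card Q = 0" by simp
    thus ?thesis using e False by simp
  qed simp
qed

lemma inner_sum:
  fixes k P :: nat assumes "k \<ge> 1"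
  shows "(\<Sum>d\<in>{d. d dvd k \<and> coprime d P}. moebius_mu d) =
         (if prime_factors k \<subseteq> {p. p dvd P} then 1 else 0)"
proof -
  define Q where "Q = {p \<in> prime_factors k. \<not> p dvd P}"
  define D where "D = {d. d dvd k \<and> coprime d P}"
  have k0: "k \<noteq> 0" using assms by simp
  have finD: "finite D" unfolding D_def
    by (rule finite_subset[OF _ finite_divisors_nat[of k]]) (use assms in auto)
  have finQ: "finite Q" unfolding Q_def by simp
  have Qp: "\<And>p. p \<in> Q \<Longrightarrow> prime p" unfolding Q_def by auto
  have "sum moebius_mu D = sum moebius_mu {d\<in>D. squarefree d}"
    by (rule sum.mono_neutral_right) (use finD in \<open>auto simp: moebius_mu_def\<close>)
  also have bij: "bij_betw (\<lambda>S. \<Prod>S) (Pow Q) {d\<in>D. squarefree d}"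
  proof (rule bij_betw_byWitness[where f' = prime_factors])
    show "(\<lambda>S. \<Prod>S) ` Pow Q \<subseteq> {d \<in> D. squarefree d}"
    proof (rule image_subsetI)
      fix S assume S: "S \<in> Pow Q"
      hence fS: "finite S" and pS: "\<And>p. p \<in> S \<Longrightarrow> prime p"
        using finQ Qp finite_subset by auto
      note pf = pf_prod_primes[OF fS pS]
      have "\<Prod>S dvd k"
        by (rule sqf_dvd[OF pf(2) k0]) (use S pf in \<open>auto simp: Q_def\<close>)
      moreover have "coprime (\<Prod>S) P"
        by (rule prod_coprime_left) (use S in \<open>auto simp: Q_def intro: prime_imp_coprime\<close>)
      ultimately show "\<Prod>S \<in> {d \<in> D. squarefree d}" using pf by (auto simp: D_def)
    qed
    show "prime_factors ` {d \<in> D. squarefree d} \<subseteq> Pow Q"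
    proof (rule image_subsetI)
      fix d assume d: "d \<in> {d \<in> D. squarefree d}"
      show "prime_factors d \<in> Pow Q"
      proof (rule PowI, rule subsetI)
        fix p assume p: "p \<in> prime_factors d"
        have "p dvd d" "prime p" using p by auto
        have "p dvd k" using d \<open>p dvd d\<close> by (auto simp: D_def intro: dvd_trans)
        moreover have "\<not> p dvd P"
        proof
          assume "p dvd P"
          thus False using d \<open>p dvd d\<close> \<open>prime p\<close> coprime_common_divisor[of d P p]
            by (auto simp: D_def)
        qed
        ultimately show "p \<in> Q" using \<open>prime p\<close> k0 by (auto simp: Q_def in_prime_factors_iff)
      qed
    qed
    show "\<forall>S\<in>Pow Q. prime_factors (\<Prod>S) = S"
      using finQ Qp finite_subset by (intro ballI pf_prod_primes(1)) auto
    show "\<forall>d \<in> {d \<in> D. squarefree d}. \<Prod>(prime_factors d) = d"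
      by (auto intro: sqf_prod_pf)
  qed
  hence "sum moebius_mu {d\<in>D. squarefree d} = (\<Sum>S\<in>Pow Q. moebius_mu (\<Prod>S))"
    by (rule sum.reindex_bij_betw[symmetric])
  also have "\<dots> = (\<Sum>S\<in>Pow Q. (-1) ^ card S)"
    using finQ Qp finite_subset by (intro sum.cong refl mu_prod) auto
  also have "\<dots> = (if Q = {} then 1 else 0)" by (rule alt_sum[OF finQ])
  also have "(Q = {}) = (prime_factors k \<subseteq> {p. p dvd P})" unfolding Q_def by auto
  finally show ?thesis unfolding D_def .
qed

lemma card_multiples:
  fixes d M :: nat assumes "d \<ge> 1"
  shows "card {k\<in>{1..M}. d dvd k} = M div d"
proof -
  have "{k\<in>{1..M}. d dvd k} = (\<lambda>j. d * j) ` {1..M div d}"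
  proof (rule set_eqI, rule iffI)
    fix k assume k: "k \<in> {k\<in>{1..M}. d dvd k}"
    then obtain j where j: "k = d * j" by auto
    have "j \<ge> 1" using k j by (cases j) auto
    moreover have "j \<le> M div d" using k j assms
      by (subst less_eq_div_iff_mult_less_eq) (auto simp: mult.commute)
    ultimately show "k \<in> (\<lambda>j. d * j) ` {1..M div d}" using j by auto
  next
    fix k assume "k \<in> (\<lambda>j. d * j) ` {1..M div d}"
    then obtain j where j0: "j \<in> {1..M div d}" and jk: "k = d * j" by (rule imageE)
    hence j: "k = d * j" "1 \<le> j" "j \<le> M div d" by auto
    have "j * d \<le> M" using j assms less_eq_div_iff_mult_less_eq[of d j M] by auto
    moreover have "d * j \<ge> 1" using j assms by simp
    ultimately show "k \<in> {k\<in>{1..M}. d dvd k}" using j by (auto simp: mult.commute)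
  qed
  also have "card \<dots> = card {1..M div d}"
    by (rule card_image) (use assms in \<open>auto simp: inj_on_def\<close>)
  finally show ?thesis by simp
qed

lemma mu_abs_le: "\<bar>real_of_int (moebius_mu n)\<bar> \<le> 1"
  by (simp add: moebius_mu_def power_abs)

lemma mu_one: "moebius_mu (Suc 0) = 1"
  by (simp add: moebius_mu_def)

lemma part1:
  fixes P :: nat and x :: real assumes "x \<ge> 1"
  shows "\<bar>\<Sum>n\<in>{n. 1 \<le> n \<and> real n \<le> x \<and> coprime n P}. real_of_int (moebius_mu n) / real n\<bar> \<le> 1"
proof -
  define M where "M = nat \<lfloor>x\<rfloor>"
  define K where "K = {1..M}"
  define C where "C = {n\<in>K. coprime n P}"
  define A where "A = {k\<in>K. prime_factors k \<subseteq> {p. p dvd P}}"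
  define mu where "mu n = real_of_int (moebius_mu n)" for n
  define f where "f d = x / real d - real (M div d)" for d
  have Mx: "real M \<le> x" "x < real M + 1" "M \<ge> 1" using assms unfolding M_def by linarith+
  have finK: "finite K" unfolding K_def by simp
  have finC: "finite C" "finite A" unfolding C_def A_def using finK by auto
  have setC: "{n. 1 \<le> n \<and> real n \<le> x \<and> coprime n P} = C"
  proof -
    have "\<And>n. real n \<le> x \<longleftrightarrow> n \<le> M"
      using Mx(1) le_nat_floor[of _ x] unfolding M_def by (meson of_nat_le_iff order_trans)
    thus ?thesis unfolding C_def K_def by auto
  qed
  have CK: "C \<subseteq> K" "A \<subseteq> K" unfolding C_def A_def by auto
  have oneC: "1 \<in> C" "1 \<in> A" unfolding C_def A_def K_def using Mx by auto
  have key: "(\<Sum>d\<in>C. mu d * real (M div d)) = real (card A)"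
  proof -
    have "(\<Sum>d\<in>C. mu d * real (M div d)) = (\<Sum>d\<in>C. \<Sum>k\<in>K. if d dvd k then mu d else 0)"
    proof (rule sum.cong[OF refl])
      fix d assume "d \<in> C"
      hence d1: "d \<ge> 1" unfolding C_def K_def by auto
      have "(\<Sum>k\<in>K. if d dvd k then mu d else 0) = (\<Sum>k\<in>{k\<in>K. d dvd k}. mu d)"
        by (rule sum.inter_filter[symmetric, OF finK])
      also have "\<dots> = real (card {k\<in>K. d dvd k}) * mu d" by simp
      also have "card {k\<in>K. d dvd k} = M div d" unfolding K_def by (rule card_multiples[OF d1])
      finally show "mu d * real (M div d) = (\<Sum>k\<in>K. if d dvd k then mu d else 0)" by simp
    qed
    also have "\<dots> = (\<Sum>k\<in>K. \<Sum>d\<in>C. if d dvd k then mu d else 0)" by (rule sum.swap)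
    also have "\<dots> = (\<Sum>k\<in>K. if prime_factors k \<subseteq> {p. p dvd P} then 1 else 0)"
    proof (rule sum.cong[OF refl])
      fix k assume k: "k \<in> K"
      have "(\<Sum>d\<in>C. if d dvd k then mu d else 0) = (\<Sum>d\<in>{d\<in>C. d dvd k}. mu d)"
        by (rule sum.inter_filter[symmetric, OF finC(1)])
      also have "{d\<in>C. d dvd k} = {d. d dvd k \<and> coprime d P}"
      proof -
        have "\<And>d. d dvd k \<Longrightarrow> 1 \<le> d \<and> d \<le> M" using k unfolding K_def
          by (auto intro: dvd_imp_le dest: dvd_imp_le)
        thus ?thesis unfolding C_def K_def by auto
      qed
      also have "(\<Sum>d\<in>{d. d dvd k \<and> coprime d P}. mu d) =
          real_of_int (\<Sum>d\<in>{d. d dvd k \<and> coprime d P}. moebius_mu d)"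
        unfolding mu_def by simp
      also have "\<dots> = (if prime_factors k \<subseteq> {p. p dvd P} then 1 else 0)"
        using k unfolding K_def by (subst inner_sum) auto
      finally show "(\<Sum>d\<in>C. if d dvd k then mu d else 0) = (if prime_factors k \<subseteq> {p. p dvd P} then 1 else 0)" .
    qed
    also have "\<dots> = (\<Sum>k\<in>A. 1)" unfolding A_def by (rule sum.inter_filter[symmetric, OF finK])
    finally show ?thesis by simp
  qed
  have fb: "0 \<le> f d \<and> f d < 1" if d1: "d \<ge> 1" for d
  proof -
    have dpos: "real d > 0" using d1 by simp
    have "(M div d) * d \<le> M" by simp
    hence "real (M div d) * real d \<le> x" using Mx(1) by (metis of_nat_le_iff of_nat_mult order_trans)
    hence a: "real (M div d) \<le> x / real d" using dpos by (simp add: field_simps)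
    have e1: "M div d * d + M mod d = M" by simp
    have e2: "M mod d < d" using d1 by simp
    have e3: "(M div d + 1) * d = M div d * d + d" by (simp add: algebra_simps)
    have "M < (M div d + 1) * d" using e1 e2 e3 by linarith
    hence "M + 1 \<le> (M div d + 1) * d" by simp
    hence "real M + 1 \<le> (real (M div d) + 1) * real d" by (metis of_nat_1 of_nat_add of_nat_le_iff of_nat_mult)
    hence "x < (real (M div d) + 1) * real d" using Mx(2) by linarith
    hence b: "x / real d < real (M div d) + 1" using dpos by (simp add: field_simps)
    show ?thesis using a b unfolding f_def by linarith
  qed
  have S_eq: "x * (\<Sum>n\<in>C. mu n / real n) = real (card A) + (x - real M) + (\<Sum>d\<in>C-{1}. mu d * f d)"
  proof -
    have "x * (\<Sum>n\<in>C. mu n / real n) = (\<Sum>d\<in>C. mu d * real (M div d) + mu d * f d)"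
      unfolding sum_distrib_left
    proof (rule sum.cong[OF refl])
      fix d assume "d \<in> C"
      hence "real d > 0" unfolding C_def K_def by auto
      thus "x * (mu d / real d) = mu d * real (M div d) + mu d * f d"
        unfolding f_def by (simp add: field_simps)
    qed
    also have "\<dots> = real (card A) + (\<Sum>d\<in>C. mu d * f d)" by (simp add: sum.distrib key)
    also have "(\<Sum>d\<in>C. mu d * f d) = mu 1 * f 1 + (\<Sum>d\<in>C-{1}. mu d * f d)"
      by (rule sum.remove[OF finC(1) oneC(1)])
    also have "mu 1 * f 1 = x - real M" unfolding mu_def f_def by (simp add: mu_one)
    finally show ?thesis by simp
  qed
  have R: "\<bar>\<Sum>d\<in>C-{1}. mu d * f d\<bar> \<le> real (card C) - 1"
  proof -
    have "\<bar>\<Sum>d\<in>C-{1}. mu d * f d\<bar> \<le> (\<Sum>d\<in>C-{1}. \<bar>mu d * f d\<bar>)" by (rule sum_abs)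
    also have "\<dots> \<le> (\<Sum>d\<in>C-{1}. 1)"
    proof (rule sum_mono)
      fix d assume "d \<in> C - {1}"
      hence "d \<ge> 1" unfolding C_def K_def by auto
      hence "\<bar>f d\<bar> \<le> 1" using fb by force
      moreover have "\<bar>mu d\<bar> \<le> 1" unfolding mu_def by (rule mu_abs_le)
      ultimately show "\<bar>mu d * f d\<bar> \<le> 1" by (simp add: abs_mult mult_le_one)
    qed
    also have "\<dots> = real (card C) - 1"
    proof -
      have "card C \<ge> 1" using finC(1) oneC(1) by (metis card_0_eq empty_iff less_one not_le)
      thus ?thesis using finC(1) oneC(1) by (simp add: card_Diff_singleton of_nat_diff)
    qed
    finally show ?thesis .
  qed
  have cards: "card A + card C \<le> M + 1"
  proof -
    have disj: "(A - {1}) \<inter> C = {}"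
    proof (rule ccontr)
      assume "(A - {1}) \<inter> C \<noteq> {}"
      then obtain k where k: "k \<in> A" "k \<noteq> 1" "k \<in> C" by auto
      then obtain p where p: "prime p" "p dvd k" using prime_factor_nat by blast
      have "k \<noteq> 0" using k unfolding A_def K_def by auto
      hence "p \<in> prime_factors k" using p by (auto simp: in_prime_factors_iff)
      hence "p dvd P" using k unfolding A_def by auto
      thus False using k p coprime_common_divisor[of k P p] unfolding C_def by auto
    qed
    have "card (A - {1}) + card C = card ((A - {1}) \<union> C)"
      using finC disj by (simp add: card_Un_disjoint)
    also have "\<dots> \<le> card K" using CK finK by (intro card_mono) auto
    also have "card K = M" unfolding K_def by simp
    finally have "card (A - {1}) + card C \<le> M" .
    moreover have "card (A - {1}) = card A - 1" using oneC by simp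
    moreover have "card A \<ge> 1" using oneC finC by (auto simp: Suc_le_eq card_gt_0_iff)
    ultimately show ?thesis by linarith
  qed
  have cC: "card C \<le> M" using card_mono[OF finK CK(1)] unfolding K_def by simp
  have cA: "card A \<ge> 1" using oneC finC by (auto simp: Suc_le_eq card_gt_0_iff)
  have cardsR: "real (card A) + real (card C) \<le> real M + 1" using cards by (metis of_nat_1 of_nat_add of_nat_le_iff)
  define S where "S = (\<Sum>n\<in>C. mu n / real n)"
  have up: "x * S \<le> x" using S_eq R cardsR unfolding S_def by linarith
  have lo: "x * S \<ge> - x" using S_eq R cA cC Mx unfolding S_def
    by (smt (verit) of_nat_1 of_nat_le_iff)
  have "\<bar>S\<bar> \<le> 1"
  proof -
    have "x * \<bar>S\<bar> \<le> x * 1" using up lo assms by (cases "S \<ge> 0") (auto simp: abs_if)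
    thus ?thesis using assms by simp
  qed
  thus ?thesis unfolding setC S_def mu_def .
qed

lemma not_coprime_prime:
  fixes a b :: nat assumes "\<not> coprime a b"
  obtains p where "prime p" "p dvd a" "p dvd b"
proof -
  have "gcd a b \<noteq> 1" using assms by (simp add: coprime_iff_gcd_eq_1)
  then obtain p where "prime p" "p dvd gcd a b" using prime_factor_nat by blast
  thus ?thesis using that by auto
qed

lemma mu_mult_coprime:
  fixes m n :: nat assumes "coprime m n" "m \<ge> 1" "n \<ge> 1"
  shows "moebius_mu (m * n) = moebius_mu m * moebius_mu n"
proof (cases "squarefree m \<and> squarefree n")
  case True
  have disj: "prime_factors m \<inter> prime_factors n = {}"
  proof (rule ccontr)
    assume "prime_factors m \<inter> prime_factors n \<noteq> {}"
    then obtain p where "p \<in> prime_factors m" "p \<in> prime_factors n" by auto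
    hence "prime p" "p dvd m" "p dvd n" by auto
    thus False using assms(1) coprime_common_divisor[of m n p] by auto
  qed
  have sq: "squarefree (m * n)" using True assms(1) by (intro squarefree_mult_coprime) auto
  have "prime_factors (m * n) = prime_factors m \<union> prime_factors n"
    using assms by (intro prime_factors_product) auto
  hence "card (prime_factors (m * n)) = card (prime_factors m) + card (prime_factors n)"
    using disj by (simp add: card_Un_disjoint)
  thus ?thesis using True sq assms by (simp add: moebius_mu_def power_add)
next
  case False
  hence "\<not> squarefree (m * n)" using squarefree_multD by blast
  thus ?thesis using False assms by (auto simp: moebius_mu_def)
qed

lemma mu_mult_not_coprime:
  fixes m n :: nat assumes "\<not> coprime m n"
  shows "moebius_mu (m * n) = 0"
proof -
  obtain p where p: "prime p" "p dvd m" "p dvd n" using not_coprime_prime[OF assms] by blast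
  have "p ^ 2 dvd m * n" using p by (auto simp: power2_eq_square intro: mult_dvd_mono)
  hence "\<not> squarefree (m * n)" using p by (intro not_squarefreeI) auto
  thus ?thesis by (simp add: moebius_mu_def)
qed

lemma part3:
  fixes m :: nat and x :: real assumes "x \<ge> 1" "m \<ge> 1"
  shows "\<bar>\<Sum>n\<in>{n. 1 \<le> n \<and> real n \<le> x}. real_of_int (moebius_mu (m * n)) / real n\<bar> \<le> 1"
proof -
  define B where "B = {n. 1 \<le> n \<and> real n \<le> x}"
  define C where "C = {n. 1 \<le> n \<and> real n \<le> x \<and> coprime n m}"
  have finB: "finite B"
  proof (rule finite_subset[of _ "{..nat \<lfloor>x\<rfloor>}"])
    show "B \<subseteq> {..nat \<lfloor>x\<rfloor>}" unfolding B_def using le_nat_floor by auto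
  qed simp
  have "(\<Sum>n\<in>B. real_of_int (moebius_mu (m * n)) / real n) =
        (\<Sum>n\<in>C. real_of_int (moebius_mu (m * n)) / real n)"
    by (rule sum.mono_neutral_right[OF finB]) 
       (auto simp: B_def C_def mu_mult_not_coprime coprime_commute)
  also have "\<dots> = real_of_int (moebius_mu m) * (\<Sum>n\<in>C. real_of_int (moebius_mu n) / real n)"
    unfolding sum_distrib_left
    by (rule sum.cong[OF refl]) (use assms in \<open>auto simp: C_def mu_mult_coprime coprime_commute\<close>)
  finally have eq: "(\<Sum>n\<in>B. real_of_int (moebius_mu (m * n)) / real n) = \<dots>" .
  have "\<bar>real_of_int (moebius_mu m) * (\<Sum>n\<in>C. real_of_int (moebius_mu n) / real n)\<bar> \<le> 1 * 1"
    unfolding abs_mult using mu_abs_le part1[OF assms(1), of m] unfolding C_def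
    by (intro mult_mono) auto
  thus ?thesis using eq unfolding B_def by simp
qed

lemma part2:
  fixes N :: nat and x :: real assumes "x \<ge> 1" "N \<ge> 1"
  shows "\<bar>\<Sum>n\<in>{n. n dvd N \<and> real n \<le> x}. real_of_int (moebius_mu n) / real n\<bar> \<le> 1"
proof -
  define M where "M = nat \<lfloor>x\<rfloor>"
  define Pr where "Pr = {p. prime p \<and> p \<le> M \<and> \<not> p dvd N}"
  define P where "P = \<Prod>Pr"
  define K where "K = {1..M}"
  define A2 where "A2 = {n. n dvd N \<and> real n \<le> x}"
  define A1 where "A1 = {n. 1 \<le> n \<and> real n \<le> x \<and> coprime n P}"
  define f where "f n = real_of_int (moebius_mu n) / real n" for n
  have finPr: "finite Pr" unfolding Pr_def by (rule finite_subset[of _ "{..M}"]) auto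
  have xle: "\<And>n. real n \<le> x \<longleftrightarrow> n \<le> M"
  proof -
    have "real M \<le> x" using assms unfolding M_def by linarith
    thus "\<And>n. real n \<le> x \<longleftrightarrow> n \<le> M"
      using le_nat_floor[of _ x] unfolding M_def by (meson of_nat_le_iff order_trans)
  qed
  have finK: "finite K" unfolding K_def by simp
  have A2K: "A2 \<subseteq> K" unfolding A2_def K_def using assms xle
    by (auto intro: dvd_pos_nat simp: Suc_le_eq)
  have A1K: "A1 \<subseteq> K" unfolding A1_def K_def using xle by auto
  have s2: "sum f A2 = (\<Sum>n\<in>K. if n \<in> A2 then f n else 0)"
  proof -
    have "{x \<in> K. x \<in> A2} = A2" using A2K by auto
    thus ?thesis using sum.inter_filter[OF finK, of f "\<lambda>n. n \<in> A2"] by simp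
  qed
  have s1: "sum f A1 = (\<Sum>n\<in>K. if n \<in> A1 then f n else 0)"
  proof -
    have "{x \<in> K. x \<in> A1} = A1" using A1K by auto
    thus ?thesis using sum.inter_filter[OF finK, of f "\<lambda>n. n \<in> A1"] by simp
  qed
  have "sum f A2 = sum f A1"
    unfolding s1 s2
  proof (rule sum.cong[OF refl])
    fix n assume n: "n \<in> K"
    show "(if n \<in> A2 then f n else 0) = (if n \<in> A1 then f n else 0)"
    proof (cases "squarefree n")
      case False
      thus ?thesis by (simp add: f_def moebius_mu_def)
    next
      case sq: True
      have n1: "1 \<le> n" "n \<le> M" using n unfolding K_def by auto
      have "n dvd N \<longleftrightarrow> coprime n P"
      proof
        assume nd: "n dvd N"
        show "coprime n P"
        proof (rule ccontr)
          assume "\<not> coprime n P"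
          then obtain p where p: "prime p" "p dvd n" "p dvd P" using not_coprime_prime by blast
          then obtain q where q: "q \<in> Pr" "p dvd q" unfolding P_def
            using prime_dvd_prod_iff[OF finPr p(1), of id] by auto
          have "p = q" using q p by (metis Pr_def mem_Collect_eq primes_dvd_imp_eq)
          hence "\<not> p dvd N" using q unfolding Pr_def by auto
          thus False using p nd dvd_trans by blast
        qed
      next
        assume cp: "coprime n P"
        show "n dvd N"
        proof (rule sqf_dvd[OF sq])
          show "N \<noteq> 0" using assms by simp
          show "prime_factors n \<subseteq> prime_factors N"
          proof
            fix p assume p: "p \<in> prime_factors n"
            hence pp: "prime p" "p dvd n" by auto
            have "p \<le> n" using pp n1 by (intro dvd_imp_le) auto
            have "p dvd N"
            proof (rule ccontr)
              assume "\<not> p dvd N"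
              hence "p \<in> Pr" unfolding Pr_def using pp \<open>p \<le> n\<close> n1 by auto
              hence "p dvd P" unfolding P_def using finPr by (metis dvd_prod_eqI id_apply)
              thus False using cp pp coprime_common_divisor[of n P p] by auto
            qed
            thus "p \<in> prime_factors N" using pp assms by (auto simp: in_prime_factors_iff)
          qed
        qed
      qed
      thus ?thesis unfolding A1_def A2_def using n1 xle by auto
    qed
  qed
  moreover have "\<bar>sum f A1\<bar> \<le> 1" unfolding A1_def f_def by (rule part1[OF assms(1)])
  ultimately show ?thesis unfolding A2_def f_def by simp
qed

theorem mainTheorem2:
  fixes P N m :: nat and x :: real
  assumes "P \<ge> 1" and "N \<ge> 1" and "m \<ge> 1" and "x \<ge> 1"
  shows "\<bar>\<Sum>n\<in>{n. 1 \<le> n \<and> real n \<le> x \<and> coprime n P}. real_of_int (moebius_mu n) / real n\<bar> \<le> 1 \<and>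
         \<bar>\<Sum>n\<in>{n. n dvd N \<and> real n \<le> x}. real_of_int (moebius_mu n) / real n\<bar> \<le> 1 \<and>
         \<bar>\<Sum>n\<in>{n. 1 \<le> n \<and> real n \<le> x}. real_of_int (moebius_mu (m * n)) / real n\<bar> \<le> 1"
  using part1[OF assms(4)] part2[OF assms(4,2)] part3[OF assms(4,3)] by blast

end
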